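(* Let $k\ge 2$ and $n$ be positive integers. If $\mathcal{F}\subset\binom{[n]}{k}$ is an intersecting family satisfying $\binom{[n]}{k-1}\subset\mathcal{D}(\mathcal{F})$, then $n\le 3k-2$.
   Context: $[n]=\{1,\dots,n\}$; $\binom{S}{j}$ is the family of all $j$-element subsets of $S$. For a family $\mathcal{F}$ of sets, $\mathcal{D}(\mathcal{F})=\{F\setminus F' : F,F'\in\mathcal{F}\}$. A family is intersecting if any two of its members (not necessarily distinct) have nonempty intersection. *)

theory Defs
  imports Main
begin

definition diff_family :: "'a set set \<Rightarrow> 'a set set" where
  "diff_family F = {A - B | A B. A \<in> F \<and> B \<in> F}"

definition intersecting :: "'a set set \<Rightarrow> bool" where
  "intersecting F \<longleftrightarrow> (\<forall>A\<in>F. \<forall>B\<in>F. A \<inter> B \<noteq> {})"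

definition k_subsets :: "'a set \<Rightarrow> nat \<Rightarrow> 'a set set" where
  "k_subsets S j = {A. A \<subseteq> S \<and> card A = j}"

end

theory Submission
  imports Defs
begin

theorem theorem2:
  fixes k n :: nat and F :: "nat set set"
  assumes "k \<ge> 2" and "n \<ge> 1"
    and "F \<subseteq> k_subsets {1..n} k"
    and "intersecting F"
    and "k_subsets {1..n} (k - 1) \<subseteq> diff_family F"
  shows "n \<le> 3 * k - 2"
proof (rule ccontr)
  assume nn: "\<not> n \<le> 3 * k - 2"
  have k2: "k \<ge> 2" by fact
  have inter: "\<And>A B. A \<in> F \<Longrightarrow> B \<in> F \<Longrightarrow> A \<inter> B \<noteq> {}"
    using assms(4) unfolding intersecting_def by blast
  have Fsub: "\<And>A. A \<in> F \<Longrightarrow> A \<subseteq> {1..n} \<and> card A = k"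
    using assms(3) unfolding k_subsets_def by blast
  have diff: "\<And>D. D \<subseteq> {1..n} \<Longrightarrow> card D = k - 1 \<Longrightarrow> \<exists>A B. A \<in> F \<and> B \<in> F \<and> D = A - B"
    using assms(5) unfolding k_subsets_def diff_family_def by blast
  have "{1..k-1} \<subseteq> {1..n}" using nn by auto
  then obtain A0 B0 where "A0 \<in> F" "B0 \<in> F" using diff[of "{1..k-1}"] by auto
  then obtain F0 where F0: "F0 \<in> F" by blast
  have F0s: "F0 \<subseteq> {1..n}" "card F0 = k" using Fsub[OF F0] by auto
  define C where "C = {1..n} - F0"
  have finC: "finite C" unfolding C_def by auto
  have cardC: "card C = n - k" unfolding C_def using F0s by (simp add: card_Diff_subset finite_subset)
  have cardC2: "card C \<ge> 2 * k - 1" using cardC nn by simp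
  have ext: "\<exists>x\<in>F0. insert x D \<in> F" if D: "D \<subseteq> C" "card D = k - 1" for D
  proof -
    have "D \<subseteq> {1..n}" using D C_def by auto
    then obtain A B where AB: "A \<in> F" "B \<in> F" "D = A - B" using diff D by blast
    have finA: "finite A" using Fsub[OF AB(1)] finite_subset by blast
    have cA: "card A = k" using Fsub[OF AB(1)] by auto
    have DA: "D \<subseteq> A" using AB by auto
    have "card (A - D) = 1" using card_Diff_subset[OF finite_subset[OF DA finA] DA] cA D k2 by simp
    then obtain x where x: "A - D = {x}" by (meson card_1_singletonE)
    have Aeq: "A = insert x D" using x DA by auto
    have "A \<inter> F0 \<noteq> {}" using inter AB F0 by blast
    moreover have "D \<inter> F0 = {}" using D C_def by auto
    ultimately have "x \<in> F0" using Aeq by auto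
    thus ?thesis using Aeq AB by blast
  qed
  have L1: "x = y" if "D \<subseteq> C" "D' \<subseteq> C" "D \<inter> D' = {}" "x \<in> F0" "y \<in> F0"
      "insert x D \<in> F" "insert y D' \<in> F" for D D' x y
  proof -
    have "insert x D \<inter> insert y D' \<noteq> {}" using inter that by blast
    then show ?thesis using that C_def by auto
  qed
  obtain D1 where D1: "D1 \<subseteq> C" "card D1 = k - 1" "finite D1"
  proof -
    have "k - 1 \<le> card C" using cardC2 by simp
    then show ?thesis using obtain_subset_with_card_n[of "k-1" C] that by blast
  qed
  obtain a where a: "a \<in> F0" "insert a D1 \<in> F" using ext D1 by blast
  have "D1 \<noteq> {}" using D1 k2 by auto
  then obtain p where p: "p \<in> D1" by blast
  define S where "S = D1 - {p}"
  have cS: "card S = k - 2" using D1 p S_def by simp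
  have SC: "S \<subseteq> C" using S_def D1 by auto
  have aC: "a \<notin> C" using a C_def by auto
  have aS: "a \<notin> S" using aC SC by auto
  have cE: "card (insert a S) = k - 1" using cS aS finite_subset[OF SC finC] k2 by simp
  have "insert a S \<subseteq> {1..n}" using SC a F0s C_def by auto
  then obtain AE B where AEB: "AE \<in> F" "B \<in> F" "insert a S = AE - B" using diff cE by blast
  have aB: "a \<notin> B" and SB: "S \<inter> B = {}" using AEB(3) by (auto simp: set_eq_iff)
  have cB: "card B = k" "finite B" using Fsub[OF AEB(2)] finite_subset by auto
  show False
  proof (cases "p \<in> B")
    case False
    hence "insert a D1 \<inter> B = {}" using aB SB S_def by auto
    thus False using inter a AEB by blast
  next
    case True
    have "card (C - B) \<ge> card C - card B" using diff_card_le_card_Diff[OF cB(2), of C] by simp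
    hence c1: "card (C - B) \<ge> k - 1" using cB cardC2 by simp
    have "S \<subseteq> C - B" using SC SB by auto
    hence "S \<subset> C - B" using c1 cS k2 by auto
    then obtain q where q: "q \<in> C" "q \<notin> B" "q \<notin> S" by auto
    define D where "D = insert q S"
    have DC: "D \<subseteq> C" using D_def q SC by auto
    have cD: "card D = k - 1" unfolding D_def using q(3) cS finite_subset[OF SC finC] k2 by simp
    obtain x where x: "x \<in> F0" "insert x D \<in> F" using ext DC cD by blast
    have "insert x D \<inter> B \<noteq> {}" using inter x AEB by blast
    moreover have "D \<inter> B = {}" using D_def q SB by auto
    ultimately have xB: "x \<in> B" by auto
    hence xa: "x \<noteq> a" using aB by auto
    define U where "U = insert p (insert q S)"
    have fS: "finite S" using finite_subset[OF SC finC] .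
    have "card U \<le> Suc (card (insert q S))" unfolding U_def using fS by (simp add: card_insert_if)
    also have "\<dots> \<le> Suc (Suc (card S))" using fS by (simp add: card_insert_if)
    finally have "card U \<le> k" using cS k2 by simp
    hence "card (C - U) \<ge> k - 1" using cardC2 diff_card_le_card_Diff[of U C] finite_subset[OF SC finC]
      unfolding U_def by simp
    then obtain D2 where D2: "D2 \<subseteq> C - U" "card D2 = k - 1"
      using obtain_subset_with_card_n[of "k-1" "C - U"] by blast
    obtain y where y: "y \<in> F0" "insert y D2 \<in> F" using ext D2 by blast
    have "D1 \<inter> D2 = {}" using D2 U_def S_def p by auto
    hence "a = y" using L1[of D1 D2 a y] D1 D2 a y by auto
    moreover have "D \<inter> D2 = {}" using D2 U_def D_def by auto
    hence "x = y" using L1[of D D2 x y] DC D2 x y by auto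
    ultimately show False using xa by simp
  qed
qed

end
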